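(* Let $G_{\mathrm{AndI}}$ be the $q$-grammar with master variables $\{x,y\}$, rule $x_j\mapsto q^jx_jy_{j+1}$, $y_j\mapsto q^jx_j$, and order AIO, with $q$-derivative $D$, and let $n\ge1$. Every term of $D^n(x_0)$ has the form $w=x_0\prod_{i\in\mathcal{I}}v_i$ (product in increasing order of $i$) for some $\mathcal{I}\subseteq\{1,\dots,n\}$ and $v_i\in\{x_i,y_i\}$. To such a word associate the step sequence $S=(s_1,\dots,s_n)$ with $s_i=U=(1,1)$ if $i\in\mathcal{I}$ and $v_i=x_i$, $s_i=L=(1,0)$ if $i\in\mathcal{I}$ and $v_i=y_i$, and $s_i=D^*=(1,-1)$ if $i\notin\mathcal{I}$. Then a word $w$ of this form is a term of $D^n(x_0)$ if and only if $S$ is a Motzkin path of length $n$ (a lattice path starting at height $0$ that never goes below height $0$ and ends at height $0$). Consequently the number of terms of $D^n(x_0)$ equals the $n$-th Motzkin number $M_n$.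
   Context: $\mathbb{K}$ is a commutative ring with unity and characteristic zero, $q$ an indeterminate. For a set $S$ of master variables, $\mathbb{S}=\{s_i:s\in S,\ i\ge0\}$ is a set of non-commuting variables, $F(\mathbb{S})$ the free group on $\mathbb{S}$, $\mathbb{E}=\mathbb{K}[q][F(\mathbb{S})]$ its group algebra. A rule $R$ assigns to each $s_i$ an element of $\mathbb{E}$, extended by $R(s_i^{-1})=-s_i^{-1}R(s_i)s_{i+1}^{-1}$. The up-arrow $\uparrow$ is the linear map replacing each letter $s_i^{\pm1}$ by $s_{i+1}^{\pm1}$. AIO stably reorders the letters of a word according to the position of their underlying variable in $x_0,y_0,x_1,y_1,\dots$. The $q$-derivative of a $q$-grammar $(S,R,\rho)$ is the $\mathbb{K}[q]$-linear map with $D(w_1\cdots w_n)=\sum_{j=1}^n\rho\big(w_1\cdots w_{j-1}R(w_j)\uparrow(w_{j+1}\cdots w_n)\big)$, $D^0=\mathrm{id}$, $D^k=D\circ D^{k-1}$. Writing an element of $\mathbb{E}$ as $\sum_{w\in F(\mathbb{S})}a_ww$, its terms are the words $w$ with $a_w\ne0$. *)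

theory Defs
  imports "HOL-Computational_Algebra.Polynomial"
begin

datatype var = X | Y

text \<open>A letter is (master variable, index, exponent sign): (s, i, True) = s_i, (s, i, False) = s_i^{-1}.
  Group elements of F(S) are represented by freely reduced lists of letters.\<close>
type_synonym letter = "var \<times> nat \<times> bool"
type_synonym word = "letter list"

definition inv_letter :: "letter \<Rightarrow> letter" where
  "inv_letter l = (case l of (s, i, e) \<Rightarrow> (s, i, \<not> e))"

definition reduce :: "letter list \<Rightarrow> word" where
  "reduce xs = foldr (\<lambda>a acc. case acc of [] \<Rightarrow> [a]
       | b # rest \<Rightarrow> (if b = inv_letter a then rest else a # acc)) xs []"

text \<open>Elements of E = K[q][F(S)] are represented as formal sums: lists of (coefficient, word);
  the element denoted is the sum of c*w. The coefficient of a word w is:\<close>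
type_synonym 'k elem = "('k poly \<times> word) list"

definition coeffE :: "'k::comm_ring_1 elem \<Rightarrow> word \<Rightarrow> 'k poly" where
  "coeffE A w = sum_list (map fst (filter (\<lambda>p. snd p = w) A))"

definition qv :: "'k::comm_ring_1 poly" where "qv = [:0, 1:]"

definition up_letter :: "letter \<Rightarrow> letter" where
  "up_letter l = (case l of (s, i, e) \<Rightarrow> (s, Suc i, e))"

definition up_word :: "word \<Rightarrow> word" where
  "up_word w = map up_letter w"

fun rule_pos :: "var \<Rightarrow> nat \<Rightarrow> 'k::comm_ring_1 elem" where
  "rule_pos X j = [(qv ^ j, [(X, j, True), (Y, Suc j, True)])]"
| "rule_pos Y j = [(qv ^ j, [(X, j, True)])]"

definition ruleAndI :: "letter \<Rightarrow> 'k::comm_ring_1 elem" where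
  "ruleAndI l = (case l of (s, i, e) \<Rightarrow>
     (if e then rule_pos s i
      else map (\<lambda>(c, u). (- c, reduce ([(s, i, False)] @ u @ [(s, Suc i, False)]))) (rule_pos s i)))"

text \<open>AIO: stable reordering of the letters by the position of their underlying variable
  in x_0, y_0, x_1, y_1, ...; the result is read as a group element (reduced).\<close>
definition aio_key :: "letter \<Rightarrow> nat" where
  "aio_key l = (case l of (s, i, e) \<Rightarrow> 2 * i + (if s = X then 0 else 1))"

definition aio :: "word \<Rightarrow> word" where
  "aio w = reduce (sort_key aio_key w)"

text \<open>q-derivative on a word: D(w_1...w_n) = sum_j rho(w_1...w_{j-1} R(w_j) up(w_{j+1}...w_n)).\<close>
definition Dword :: "word \<Rightarrow> 'k::comm_ring_1 elem" where
  "Dword w = concat (map (\<lambda>j. map (\<lambda>(c, u). (c, aio (reduce (take j w @ u @ up_word (drop (Suc j) w)))))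
                                   (ruleAndI (w ! j)))
                         [0..<length w])"

definition Dq :: "'k::comm_ring_1 elem \<Rightarrow> 'k elem" where
  "Dq A = concat (map (\<lambda>(c, u). map (\<lambda>(d, v). (c * d, v)) (Dword u)) A)"

definition x0_elem :: "'k::comm_ring_1 elem" where
  "x0_elem = [(1, [(X, 0, True)])]"

definition andI_word :: "nat set \<Rightarrow> (nat \<Rightarrow> var) \<Rightarrow> word" where
  "andI_word I v = (X, 0, True) # map (\<lambda>i. (v i, i, True)) (sorted_list_of_set I)"

text \<open>Steps: U = +1, L = 0, D* = -1 (heights of steps (1,1), (1,0), (1,-1)).\<close>
definition step_seq :: "nat \<Rightarrow> nat set \<Rightarrow> (nat \<Rightarrow> var) \<Rightarrow> int list" where
  "step_seq n I v = map (\<lambda>i. if i \<in> I then (if v i = X then 1 else 0) else -1) [1..<Suc n]"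

definition motzkin_path :: "int list \<Rightarrow> bool" where
  "motzkin_path s \<longleftrightarrow> set s \<subseteq> {-1, 0, 1} \<and>
     (\<forall>k \<le> length s. sum_list (take k s) \<ge> 0) \<and> sum_list s = 0"

definition motzkin_number :: "nat \<Rightarrow> nat" where
  "motzkin_number n = card {s. length s = n \<and> motzkin_path s}"

end

theory Submission
  imports Defs
begin


definition ltr :: "int \<Rightarrow> nat \<Rightarrow> letter" where
  "ltr a k = (if a = 1 then X else Y, k, True)"

fun wdr :: "nat \<Rightarrow> int list \<Rightarrow> word" where
  "wdr k [] = []"
| "wdr k (a # s) = (if a = -1 then [] else [ltr a k]) @ wdr (Suc k) s"

fun mz :: "int \<Rightarrow> int list \<Rightarrow> bool" where
  "mz h [] = (h = 0)"
| "mz h (a # s) = (h \<ge> 0 \<and> a \<in> {-1,0,1} \<and> mz (h + a) s)"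

definition tsucc :: "int list \<Rightarrow> int list set" where
  "tsucc t = {xs @ 1 # 0 # ys | xs ys. t = xs @ 1 # ys} \<union> {xs @ 1 # -1 # ys | xs ys. t = xs @ 0 # ys}"

definition Mset :: "nat \<Rightarrow> int list set" where
  "Mset n = {t. length t = Suc n \<and> (\<exists>s. t = 1 # s \<and> mz 0 s)}"

lemma wdr_append: "wdr k (xs @ ys) = wdr k xs @ wdr (k + length xs) ys"
  by (induction xs arbitrary: k) auto

lemma up_wdr: "up_word (wdr k t) = wdr (Suc k) t"
  by (induction t arbitrary: k) (auto simp: up_word_def up_letter_def ltr_def)

lemma wdr_idx: "l \<in> set (wdr k t) \<Longrightarrow> k \<le> fst (snd l)"
  by (induction t arbitrary: k) (auto simp: ltr_def split: if_splits dest: Suc_leD)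

lemma wdr_pos: "l \<in> set (wdr k t) \<Longrightarrow> snd (snd l)"
  by (induction t arbitrary: k) (auto simp: ltr_def split: if_splits)

lemma wdr_sorted: "sorted (map aio_key (wdr k t))"
proof (induction t arbitrary: k)
  case Nil then show ?case by simp
next
  case (Cons a t)
  have "\<forall>l\<in>set (wdr (Suc k) t). aio_key (ltr a k) \<le> aio_key l"
  proof
    fix l assume "l \<in> set (wdr (Suc k) t)"
    then have "Suc k \<le> fst (snd l)" by (rule wdr_idx)
    then show "aio_key (ltr a k) \<le> aio_key l"
      by (cases l) (auto simp: aio_key_def ltr_def)
  qed
  then show ?case using Cons[of "Suc k"] by auto
qed

lemma reduce_Cons: "reduce (a # xs) = (case reduce xs of [] \<Rightarrow> [a]
       | b # rest \<Rightarrow> (if b = inv_letter a then rest else a # b # rest))"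
  by (simp add: reduce_def split: list.split)

lemma reduce_pos: "\<forall>l\<in>set xs. snd (snd l) \<Longrightarrow> reduce xs = xs"
proof (induction xs)
  case Nil then show ?case by (simp add: reduce_def)
next
  case (Cons a xs)
  then show ?case
    by (cases xs) (auto simp: reduce_Cons inv_letter_def split: prod.splits)
qed

lemma reduce_wdr: "reduce (wdr k t) = wdr k t"
  using reduce_pos wdr_pos by blast

lemma aio_wdr: "aio (wdr k t) = wdr k t"
  by (simp add: aio_def sort_key_id_if_sorted wdr_sorted reduce_wdr)

lemma wdr_decomp: "wdr k t = p @ a # r \<Longrightarrow> \<exists>xs b ys. t = xs @ b # ys \<and> b \<noteq> -1 \<and> p = wdr k xs
   \<and> a = ltr b (k + length xs) \<and> r = wdr (Suc (k + length xs)) ys"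
proof (induction t arbitrary: k p)
  case Nil then show ?case by simp
next
  case (Cons c t)
  show ?case
  proof (cases "c = -1")
    case True
    then have "wdr (Suc k) t = p @ a # r" using Cons.prems by simp
    from Cons.IH[OF this] obtain xs b ys where "t = xs @ b # ys \<and> b \<noteq> -1 \<and> p = wdr (Suc k) xs
   \<and> a = ltr b (Suc k + length xs) \<and> r = wdr (Suc (Suc k + length xs)) ys" by blast
    then show ?thesis using True by (intro exI[of _ "c # xs"] exI[of _ b] exI[of _ ys]) auto
  next
    case False
    then have e: "ltr c k # wdr (Suc k) t = p @ a # r" using Cons.prems by simp
    show ?thesis
    proof (cases p)
      case Nil
      then show ?thesis using e False by (intro exI[of _ "[]"] exI[of _ c] exI[of _ t]) auto
    next
      case (Cons p0 p')
      then have "wdr (Suc k) t = p' @ a # r" "p0 = ltr c k" using e by auto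
      from Cons.IH[OF this(1)] obtain xs b ys where "t = xs @ b # ys \<and> b \<noteq> -1 \<and> p' = wdr (Suc k) xs
   \<and> a = ltr b (Suc k + length xs) \<and> r = wdr (Suc (Suc k + length xs)) ys" by blast
      then show ?thesis using False Cons \<open>p0 = _\<close>
        by (intro exI[of _ "c # xs"] exI[of _ b] exI[of _ ys]) auto
    qed
  qed
qed

lemma Dword_mem: "(c, v) \<in> set (Dword w) \<longleftrightarrow> (\<exists>j<length w. \<exists>u. (c,u) \<in> set (ruleAndI (w!j)) \<and>
    v = aio (reduce (take j w @ u @ up_word (drop (Suc j) w))))"
  by (force simp: Dword_def)

lemma Dq_mem: "(e, v) \<in> set (Dq A) \<longleftrightarrow> (\<exists>c u d. (c,u) \<in> set A \<and> (d,v) \<in> set (Dword u) \<and> e = c * d)"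
  by (force simp: Dq_def)


lemma wdr_10: "wdr m (1 # 0 # ys) = (X, m, True) # (Y, Suc m, True) # wdr (Suc (Suc m)) ys"
  by (simp add: ltr_def)
lemma wdr_1m: "wdr m (1 # -1 # ys) = (X, m, True) # wdr (Suc (Suc m)) ys"
  by (simp add: ltr_def)

lemma DW1:
  assumes valid: "set t \<subseteq> {-1,0,1}" and mem: "(c, v) \<in> set (Dword (wdr 0 t))"
  shows "(\<exists>k. c = qv ^ k) \<and> v \<in> wdr 0 ` tsucc t"
proof -
  let ?w = "wdr 0 t"
  from mem obtain j u where j: "j < length ?w" and cu: "(c,u) \<in> set (ruleAndI (?w!j))"
    and v: "v = aio (reduce (take j ?w @ u @ up_word (drop (Suc j) ?w)))"
    unfolding Dword_mem by blast
  have "?w = take j ?w @ ?w ! j # drop (Suc j) ?w" using j by (rule id_take_nth_drop)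
  from wdr_decomp[OF this] obtain xs b ys where
    d: "t = xs @ b # ys" "b \<noteq> -1" "take j ?w = wdr 0 xs" "?w ! j = ltr b (length xs)"
       "drop (Suc j) ?w = wdr (Suc (length xs)) ys" by auto
  have "b \<in> {0,1}" using d(1,2) valid by auto
  then show ?thesis
  proof
    assume b0: "b = 0"
    then have "c = qv ^ length xs" "u = [(X, length xs, True)]"
      using cu d(4) by (auto simp: ruleAndI_def ltr_def)
    moreover have "take j ?w @ u @ up_word (drop (Suc j) ?w) = wdr 0 (xs @ 1 # -1 # ys)"
      using d(3,5) \<open>u = _\<close> by (simp add: up_wdr wdr_append ltr_def)
    moreover have "xs @ 1 # -1 # ys \<in> tsucc t" using d(1) b0 unfolding tsucc_def by blast
    ultimately show ?thesis using v by (auto simp: reduce_wdr aio_wdr)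
  next
    assume b1: "b \<in> {1}"
    then have "c = qv ^ length xs" "u = [(X, length xs, True), (Y, Suc (length xs), True)]"
      using cu d(4) by (auto simp: ruleAndI_def ltr_def)
    moreover have "take j ?w @ u @ up_word (drop (Suc j) ?w) = wdr 0 (xs @ 1 # 0 # ys)"
      using d(3,5) \<open>u = _\<close> by (simp add: up_wdr wdr_append ltr_def)
    moreover have "xs @ 1 # 0 # ys \<in> tsucc t" using d(1) b1 unfolding tsucc_def by blast
    ultimately show ?thesis using v by (auto simp: reduce_wdr aio_wdr)
  qed
qed

lemma DW2:
  assumes "t' \<in> tsucc t"
  shows "\<exists>c. (c, wdr 0 t') \<in> set (Dword (wdr 0 t))"
proof -
  from assms consider (a) xs ys where "t = xs @ 1 # ys" "t' = xs @ 1 # 0 # ys"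
    | (b) xs ys where "t = xs @ 0 # ys" "t' = xs @ 1 # -1 # ys"
    unfolding tsucc_def by blast
  then show ?thesis
  proof cases
    case a
    let ?j = "length (wdr 0 xs)"
    have w: "wdr 0 t = wdr 0 xs @ (X, length xs, True) # wdr (Suc (length xs)) ys"
      using a by (simp add: wdr_append ltr_def)
    have w': "wdr 0 t' = wdr 0 xs @ (X, length xs, True) # (Y, Suc (length xs), True) # wdr (Suc (Suc (length xs))) ys"
      using a by (simp add: wdr_append ltr_def)
    have "\<exists>c. (c, aio (reduce (wdr 0 t'))) \<in> set (Dword (wdr 0 t))"
      unfolding Dword_mem w w'
      apply (rule exI[of _ "qv ^ length xs"])
      apply (rule exI[of _ ?j])
      apply (simp add: ruleAndI_def up_wdr)
      done
    then show ?thesis by (simp add: reduce_wdr aio_wdr)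
  next
    case b
    let ?j = "length (wdr 0 xs)"
    have w: "wdr 0 t = wdr 0 xs @ (Y, length xs, True) # wdr (Suc (length xs)) ys"
      using b by (simp add: wdr_append ltr_def)
    have w': "wdr 0 t' = wdr 0 xs @ (X, length xs, True) # wdr (Suc (Suc (length xs))) ys"
      using b by (simp add: wdr_append ltr_def)
    have "\<exists>c. (c, aio (reduce (wdr 0 t'))) \<in> set (Dword (wdr 0 t))"
      unfolding Dword_mem w w'
      apply (rule exI[of _ "qv ^ length xs"])
      apply (rule exI[of _ ?j])
      apply (simp add: ruleAndI_def up_wdr)
      done
    then show ?thesis by (simp add: reduce_wdr aio_wdr)
  qed
qed



lemma mz_nonneg: "mz h s \<Longrightarrow> h \<ge> 0"
  by (cases s) auto

lemma mz_valid: "mz h s \<Longrightarrow> set s \<subseteq> {-1,0,1}"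
  by (induction s arbitrary: h) auto

lemma mz_ins0: "mz h (xs @ 0 # ys) \<longleftrightarrow> mz h (xs @ ys)"
  by (induction xs arbitrary: h) (auto dest: mz_nonneg)

lemma mz_rep: "mz h (xs @ 1 # -1 # ys) \<longleftrightarrow> mz h (xs @ 0 # ys)"
  by (induction xs arbitrary: h) auto

lemma mz_adj: "mz h (1 # p) \<Longrightarrow> \<exists>xs ys. 1 # p = xs @ 1 # 0 # ys \<or> 1 # p = xs @ 1 # -1 # ys"
proof (induction p arbitrary: h)
  case Nil then show ?case by (auto dest: mz_nonneg)
next
  case (Cons b p)
  then have "b \<in> {-1,0,1}" by auto
  moreover
  { assume "b = 1"
    then have "mz (h+1) (1 # p)" using Cons.prems by auto
    from Cons.IH[OF this] obtain xs ys where "1 # p = xs @ 1 # 0 # ys \<or> 1 # p = xs @ 1 # -1 # ys" by blast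
    then have ?case using \<open>b = 1\<close> by (metis append_Cons) }
  ultimately show ?case by (metis append_Nil insertE singletonD)
qed




lemma tsucc_I1: "xs @ 1 # 0 # ys \<in> tsucc (xs @ 1 # ys)"
  unfolding tsucc_def by blast
lemma tsucc_I2: "xs @ 1 # -1 # ys \<in> tsucc (xs @ 0 # ys)"
  unfolding tsucc_def by blast

lemma Mset_Suc: "Mset (Suc n) = \<Union> (tsucc ` Mset n)"
proof
  show "Mset (Suc n) \<subseteq> \<Union> (tsucc ` Mset n)"
  proof
    fix t' assume "t' \<in> Mset (Suc n)"
    then obtain p where t': "t' = 1 # p" "mz 0 p" "length p = Suc n" unfolding Mset_def by auto
    then obtain b p' where p: "p = b # p'" by (cases p) auto
    have "b \<in> {-1,0,1}" using t' p by auto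
    moreover have "b \<noteq> -1" using t' p by (auto dest: mz_nonneg)
    moreover
    { assume b0: "b = 0"
      have "1 # p' \<in> Mset n" using t' p b0 by (simp add: Mset_def)
      moreover have "t' \<in> tsucc ([] @ 1 # p')" using t' p b0 tsucc_I1[of "[]" p'] by simp
      ultimately have "t' \<in> \<Union> (tsucc ` Mset n)" by auto }
    moreover
    { assume b1: "b = 1"
      then have m1: "mz 0 (1 # p')" using t' p by simp
      from mz_adj[OF this] obtain xs ys where "1 # p' = xs @ 1 # 0 # ys \<or> 1 # p' = xs @ 1 # -1 # ys" by blast
      then have "t' \<in> \<Union> (tsucc ` Mset n)"
      proof
        assume e: "1 # p' = xs @ 1 # 0 # ys"
        let ?s = "xs @ 1 # ys"
        have "mz 0 ?s" using m1 mz_ins0[of 0 "xs @ [1]" ys] e by simp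
        moreover have "length (1 # p') = Suc (length ?s)" using e by simp
        then have "length ?s = n" using t' p by simp
        ultimately have "1 # ?s \<in> Mset n" unfolding Mset_def by auto
        moreover have "t' = (1 # xs) @ 1 # 0 # ys" using t' p b1 e by simp
        then have "t' \<in> tsucc ((1 # xs) @ 1 # ys)" using tsucc_I1 by metis
        ultimately show ?thesis by auto
      next
        assume e: "1 # p' = xs @ 1 # -1 # ys"
        let ?s = "xs @ 0 # ys"
        have "mz 0 ?s" using m1 mz_rep[of 0 xs ys] e by simp
        moreover have "length (1 # p') = Suc (length ?s)" using e by simp
        then have "length ?s = n" using t' p by simp
        ultimately have "1 # ?s \<in> Mset n" unfolding Mset_def by auto
        moreover have "t' = (1 # xs) @ 1 # -1 # ys" using t' p b1 e by simp
        then have "t' \<in> tsucc ((1 # xs) @ 0 # ys)" using tsucc_I2 by metis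
        ultimately show ?thesis by auto
      qed }
    ultimately show "t' \<in> \<Union> (tsucc ` Mset n)" by blast
  qed
next
  show "\<Union> (tsucc ` Mset n) \<subseteq> Mset (Suc n)"
  proof
    fix t' assume "t' \<in> \<Union> (tsucc ` Mset n)"
    then obtain t where t: "t \<in> Mset n" "t' \<in> tsucc t" by blast
    then obtain s where s: "t = 1 # s" "mz 0 s" "length s = n" unfolding Mset_def by auto
    from t(2) consider (a) xs ys where "t = xs @ 1 # ys" "t' = xs @ 1 # 0 # ys"
      | (b) xs ys where "t = xs @ 0 # ys" "t' = xs @ 1 # -1 # ys"
      unfolding tsucc_def by blast
    then show "t' \<in> Mset (Suc n)"
    proof cases
      case a
      show ?thesis
      proof (cases xs)
        case Nil
        then show ?thesis using a s unfolding Mset_def by simp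
      next
        case (Cons x xs')
        then have sx: "s = xs' @ 1 # ys" "x = 1" using a s by auto
        then have "mz 0 (xs' @ 1 # 0 # ys)" using s mz_ins0[of 0 "xs' @ [1]" ys] by simp
        then show ?thesis using a s Cons sx unfolding Mset_def by simp
      qed
    next
      case b
      show ?thesis
      proof (cases xs)
        case Nil
        then show ?thesis using b s by simp
      next
        case (Cons x xs')
        then have sx: "s = xs' @ 0 # ys" "x = 1" using b s by auto
        then have "mz 0 (xs' @ 1 # -1 # ys)" using s mz_rep[of 0 xs' ys] by simp
        then show ?thesis using b s Cons sx unfolding Mset_def by simp
      qed
    qed
  qed
qed




lemma Mset_valid: "t \<in> Mset n \<Longrightarrow> set t \<subseteq> {-1,0,1}"
  unfolding Mset_def using mz_valid by fastforce

lemma inv_step: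
  fixes A :: "'k::comm_ring_1 elem"
  assumes c: "\<forall>p\<in>set A. \<exists>k. fst p = qv ^ k" and s: "snd ` set A = wdr 0 ` Mset n"
  shows "(\<forall>p\<in>set (Dq A). \<exists>k. fst p = qv ^ k) \<and> snd ` set (Dq A) = wdr 0 ` Mset (Suc n)"
proof (intro conjI ballI)
  fix p assume "p \<in> set (Dq A)"
  obtain e v where p: "p = (e, v)" by (cases p)
  with \<open>p \<in> _\<close> have "(e, v) \<in> set (Dq A)" by simp
  then obtain c u d where cu: "(c,u) \<in> set A" "(d,v) \<in> set (Dword u)" "e = c * d"
    unfolding Dq_mem by blast
  obtain k where "c = qv ^ k" using c cu(1) by fastforce
  have "u \<in> wdr 0 ` Mset n" using s cu(1) by force
  then obtain t where t: "t \<in> Mset n" "u = wdr 0 t" by blast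
  obtain k' where "d = qv ^ k'" using DW1[OF Mset_valid[OF t(1)]] cu(2) t(2) by blast
  then show "\<exists>k. fst p = qv ^ k" unfolding p using cu(3) \<open>c = _\<close>
    by (intro exI[of _ "k+k'"]) (simp add: power_add)
next
  show "snd ` set (Dq A) = wdr 0 ` Mset (Suc n)"
  proof
    show "snd ` set (Dq A) \<subseteq> wdr 0 ` Mset (Suc n)"
    proof
      fix v assume "v \<in> snd ` set (Dq A)"
      then obtain e where "(e, v) \<in> set (Dq A)" by force
      then obtain c u d where cu: "(c,u) \<in> set A" "(d,v) \<in> set (Dword u)" "e = c * d"
        unfolding Dq_mem by blast
      have "u \<in> wdr 0 ` Mset n" using s cu(1) by force
      then obtain t where t: "t \<in> Mset n" "u = wdr 0 t" by blast
      have "v \<in> wdr 0 ` tsucc t" using DW1[OF Mset_valid[OF t(1)]] cu(2) t(2) by blast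
      then show "v \<in> wdr 0 ` Mset (Suc n)" using t(1) Mset_Suc by blast
    qed
  next
    show "wdr 0 ` Mset (Suc n) \<subseteq> snd ` set (Dq A)"
    proof
      fix v assume "v \<in> wdr 0 ` Mset (Suc n)"
      then obtain t t' where tt: "t \<in> Mset n" "t' \<in> tsucc t" "v = wdr 0 t'" using Mset_Suc by blast
      have "wdr 0 t \<in> snd ` set A" using s tt(1) by blast
      then obtain c where c1: "(c, wdr 0 t) \<in> set A" by force
      obtain d :: "'k poly" where "(d, wdr 0 t') \<in> set (Dword (wdr 0 t))" using DW2[OF tt(2)] by blast
      then have "(c * d, v) \<in> set (Dq A)" unfolding Dq_mem using c1 tt(3) by blast
      then show "v \<in> snd ` set (Dq A)" by force
    qed
  qed
qed

lemma inv_all: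
  "(\<forall>p\<in>set ((Dq ^^ n) (x0_elem :: 'k::comm_ring_1 elem)). \<exists>k. fst p = qv ^ k)
   \<and> snd ` set ((Dq ^^ n) (x0_elem :: 'k elem)) = wdr 0 ` Mset n"
proof (induction n)
  case 0
  have "Mset 0 = {[1]}" unfolding Mset_def by (auto simp: length_Suc_conv)
  then show ?case by (auto simp: x0_elem_def ltr_def intro: exI[of _ 0])
next
  case (Suc n)
  show ?case using inv_step[OF conjunct1[OF Suc.IH] conjunct2[OF Suc.IH]] by simp
qed

lemma poly_sum1:
  "\<forall>p\<in>set A. \<exists>k. fst p = (qv :: 'k::comm_ring_1 poly) ^ k \<Longrightarrow>
   poly (sum_list (map fst A)) 1 = of_nat (length A)"
proof (induction A)
  case Nil then show ?case by simp
next
  case (Cons a A)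
  then obtain k where "fst a = qv ^ k" by auto
  then show ?case using Cons by (simp add: qv_def poly_power)
qed

lemma coeff_nz:
  fixes A :: "('k::{comm_ring_1, ring_char_0}) elem"
  assumes "\<forall>p\<in>set A. \<exists>k. fst p = qv ^ k"
  shows "coeffE A w \<noteq> 0 \<longleftrightarrow> w \<in> snd ` set A"
proof
  assume "coeffE A w \<noteq> 0"
  then have "filter (\<lambda>p. snd p = w) A \<noteq> []" unfolding coeffE_def by auto
  then show "w \<in> snd ` set A" by (auto simp: filter_empty_conv)
next
  assume "w \<in> snd ` set A"
  then have ne: "filter (\<lambda>p. snd p = w) A \<noteq> []" by (auto simp: filter_empty_conv)
  have "poly (coeffE A w) 1 = of_nat (length (filter (\<lambda>p. snd p = w) A))"
    unfolding coeffE_def by (rule poly_sum1) (use assms in auto)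
  also have "\<dots> \<noteq> 0" using ne by simp
  finally show "coeffE A w \<noteq> 0" by auto
qed

lemma T_eq:
  "{w. coeffE ((Dq ^^ n) (x0_elem :: ('k::{comm_ring_1, ring_char_0}) elem)) w \<noteq> 0} = wdr 0 ` Mset n"
  using inv_all[of n, where 'k='k] coeff_nz[of "(Dq ^^ n) (x0_elem :: 'k elem)"] by auto




lemma sl_wdr:
  "I \<subseteq> {k..<k+m} \<Longrightarrow> map (\<lambda>i. (v i, i, True)) (sorted_list_of_set I)
     = wdr k (map (\<lambda>i. if i \<in> I then (if v i = X then 1 else 0) else -1) [k..<k+m])"
proof (induction m arbitrary: k I)
  case 0 then show ?case by simp
next
  case (Suc m)
  have up: "[k..<k+Suc m] = k # [Suc k..<Suc k+m]" by (simp add: upt_conv_Cons)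
  have fin: "finite I" using Suc.prems finite_subset by blast
  show ?case
  proof (cases "k \<in> I")
    case True
    have mn: "Min I = k" using True Suc.prems fin by (intro Min_eqI) auto
    have sl: "sorted_list_of_set I = k # sorted_list_of_set (I - {k})"
      using sorted_list_of_set_nonempty[OF fin] True mn by auto
    have sub: "I - {k} \<subseteq> {Suc k..<Suc k+m}" using Suc.prems by auto
    have eq: "map (\<lambda>i. if i \<in> I then (if v i = X then 1 else 0) else -1) [Suc k..<Suc k+m]
        = map (\<lambda>i. if i \<in> I - {k} then (if v i = X then 1 else 0) else (-1::int)) [Suc k..<Suc k+m]"
      by (rule map_cong) auto
    show ?thesis using Suc.IH[OF sub] True
      by (simp only: up sl eq list.map) (cases "v k"; simp add: ltr_def)
  next
    case False
    have sub: "I \<subseteq> {Suc k..<Suc k+m}"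
    proof
      fix x assume "x \<in> I"
      then have "x \<in> {k..<k + Suc m}" "x \<noteq> k" using Suc.prems False by auto
      then show "x \<in> {Suc k..<Suc k+m}" by auto
    qed
    show ?thesis using Suc.IH[OF sub] False by (simp only: up list.map) (simp del: upt_Suc)
  qed
qed

lemma andI_wd: "I \<subseteq> {1..n} \<Longrightarrow> andI_word I v = wdr 0 (1 # step_seq n I v)"
proof -
  assume "I \<subseteq> {1..n}"
  then have "I \<subseteq> {1..<1+n}" by auto
  from sl_wdr[OF this, of v] show ?thesis
    by (simp add: andI_word_def step_seq_def ltr_def)
qed

lemma step_seq_len: "length (step_seq n I v) = n"
  by (simp add: step_seq_def)

lemma step_seq_valid: "set (step_seq n I v) \<subseteq> {-1,0,1}"
  by (auto simp: step_seq_def)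

lemma wdr_noteq: "wdr (Suc k) s \<noteq> ltr x k # r"
proof
  assume "wdr (Suc k) s = ltr x k # r"
  then have "ltr x k \<in> set (wdr (Suc k) s)" by simp
  from wdr_idx[OF this] show False by (simp add: ltr_def)
qed

lemma wdr_inj: "wdr k t = wdr k t' \<Longrightarrow> length t = length t' \<Longrightarrow> set t \<subseteq> {-1,0,1}
  \<Longrightarrow> set t' \<subseteq> {-1,0,1} \<Longrightarrow> t = t'"
proof (induction t arbitrary: k t')
  case Nil then show ?case by simp
next
  case (Cons c t)
  then obtain c' t'' where t': "t' = c' # t''" by (cases t') auto
  have v: "c \<in> {-1,0,1}" "c' \<in> {-1,0,1}" "set t \<subseteq> {-1,0,1}" "set t'' \<subseteq> {-1,0,1}"
    using Cons.prems t' by auto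
  have e: "(if c = -1 then [] else [ltr c k]) @ wdr (Suc k) t = (if c' = -1 then [] else [ltr c' k]) @ wdr (Suc k) t''"
    using Cons.prems(1) t' by simp
  have nk: "\<And>x s. x \<noteq> -1 \<Longrightarrow> wdr (Suc k) s \<noteq> ltr x k # wdr (Suc k) t''" 
    "\<And>x s. x \<noteq> -1 \<Longrightarrow> wdr (Suc k) s \<noteq> ltr x k # wdr (Suc k) t"
    using wdr_noteq by blast+
  show ?case
  proof (cases "c = -1")
    case True
    show ?thesis
    proof (cases "c' = -1")
      case True
      then show ?thesis using e \<open>c = -1\<close> Cons.IH[of "Suc k" t''] Cons.prems t' v by auto
    next
      case False
      then show ?thesis using e \<open>c = -1\<close> nk(1)[of c' t] by simp
    qed
  next
    case False
    show ?thesis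
    proof (cases "c' = -1")
      case True
      then show ?thesis using e False nk(2)[of c t''] by simp
    next
      case False
      have "ltr c k = ltr c' k" "wdr (Suc k) t = wdr (Suc k) t''" using e False \<open>c \<noteq> -1\<close> by auto
      then have "c = c'" using v False \<open>c \<noteq> -1\<close> by (auto simp: ltr_def split: if_splits)
      then show ?thesis using \<open>wdr (Suc k) t = _\<close> Cons.IH[of "Suc k" t''] Cons.prems t' v by auto
    qed
  qed
qed

lemma mz_iff: "mz h s \<longleftrightarrow> set s \<subseteq> {-1,0,1} \<and> (\<forall>k\<le>length s. h + sum_list (take k s) \<ge> 0) \<and> h + sum_list s = 0"
proof (induction s arbitrary: h)
  case Nil then show ?case by auto
next
  case (Cons a s)
  have "(\<forall>k\<le>length (a # s). h + sum_list (take k (a # s)) \<ge> 0) \<longleftrightarrow>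
        h \<ge> 0 \<and> (\<forall>k\<le>length s. (h + a) + sum_list (take k s) \<ge> 0)"
  proof
    assume H: "\<forall>k\<le>length (a # s). h + sum_list (take k (a # s)) \<ge> 0"
    have "h \<ge> 0" using H[rule_format, of 0] by simp
    moreover have "\<forall>k\<le>length s. (h + a) + sum_list (take k s) \<ge> 0"
    proof (intro allI impI)
      fix k assume "k \<le> length s"
      then show "(h + a) + sum_list (take k s) \<ge> 0" using H[rule_format, of "Suc k"] by (simp add: add.assoc)
    qed
    ultimately show "h \<ge> 0 \<and> (\<forall>k\<le>length s. (h + a) + sum_list (take k s) \<ge> 0)" by blast
  next
    assume H: "h \<ge> 0 \<and> (\<forall>k\<le>length s. (h + a) + sum_list (take k s) \<ge> 0)"
    show "\<forall>k\<le>length (a # s). h + sum_list (take k (a # s)) \<ge> 0"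
    proof (intro allI impI)
      fix k assume k: "k \<le> length (a # s)"
      show "h + sum_list (take k (a # s)) \<ge> 0"
      proof (cases k)
        case 0 then show ?thesis using H by simp
      next
        case (Suc k') then show ?thesis using H k by (simp add: add.assoc)
      qed
    qed
  qed
  then show ?case using Cons.IH[of "h + a"] by (auto simp: add.assoc)
qed

lemma motzkin_mz: "motzkin_path s \<longleftrightarrow> mz 0 s"
  unfolding motzkin_path_def mz_iff by simp

theorem proposition6p9:
  fixes n :: nat
  assumes "n \<ge> 1"
  defines "T \<equiv> {w. coeffE ((Dq ^^ n) (x0_elem :: ('k::{comm_ring_1, ring_char_0}) elem)) w \<noteq> 0}"
  shows "(\<forall>w \<in> T. \<exists>I v. I \<subseteq> {1..n} \<and> w = andI_word I v)
     \<and> (\<forall>I v. I \<subseteq> {1..n} \<longrightarrow> (andI_word I v \<in> T \<longleftrightarrow> motzkin_path (step_seq n I v)))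
     \<and> card T = motzkin_number n"
proof -
  have T: "T = wdr 0 ` Mset n" unfolding T_def by (rule T_eq)
  have P1: "\<forall>w \<in> T. \<exists>I v. I \<subseteq> {1..n} \<and> w = andI_word I v"
  proof
    fix w assume "w \<in> T"
    then obtain s where s: "w = wdr 0 (1 # s)" "mz 0 s" "length s = n"
      unfolding T Mset_def by auto
    have val: "set s \<subseteq> {-1,0,1}" using s(2) by (rule mz_valid)
    define I where "I = {i \<in> {1..n}. s ! (i - 1) \<noteq> -1}"
    define v where "v = (\<lambda>i. if s ! (i - 1) = 1 then X else Y)"
    have "step_seq n I v = s"
    proof (rule nth_equalityI)
      show "length (step_seq n I v) = length s" using s(3) by (simp add: step_seq_len)
    next
      fix i assume "i < length (step_seq n I v)"
      then have i: "i < n" by (simp add: step_seq_len)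
      have "s ! i \<in> {-1,0,1}" using val i s(3) nth_mem by blast
      moreover have "step_seq n I v ! i = (if Suc i \<in> I then (if v (Suc i) = X then 1 else 0) else -1)"
        using i by (simp add: step_seq_def del: upt_Suc)
      moreover have "Suc i \<in> I \<longleftrightarrow> s ! i \<noteq> -1" using i by (simp add: I_def)
      moreover have "v (Suc i) = X \<longleftrightarrow> s ! i = 1" by (simp add: v_def)
      ultimately show "step_seq n I v ! i = s ! i" by auto
    qed
    moreover have "I \<subseteq> {1..n}" unfolding I_def by auto
    ultimately show "\<exists>I v. I \<subseteq> {1..n} \<and> w = andI_word I v"
      using andI_wd s(1) by metis
  qed
  have P2: "\<forall>I v. I \<subseteq> {1..n} \<longrightarrow> (andI_word I v \<in> T \<longleftrightarrow> motzkin_path (step_seq n I v))"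
  proof (intro allI impI)
    fix I v assume I: "I \<subseteq> {1..n}"
    let ?ss = "step_seq n I v"
    show "andI_word I v \<in> T \<longleftrightarrow> motzkin_path ?ss"
    proof
      assume "andI_word I v \<in> T"
      then obtain t where t: "t \<in> Mset n" "wdr 0 (1 # ?ss) = wdr 0 t" using andI_wd[OF I] T by auto
      then obtain s where s: "t = 1 # s" "mz 0 s" "length s = n" unfolding Mset_def by auto
      have "1 # ?ss = t"
        using wdr_inj[OF t(2)] s step_seq_len step_seq_valid mz_valid[OF s(2)] by simp
      then show "motzkin_path ?ss" using s by (simp add: motzkin_mz)
    next
      assume "motzkin_path ?ss"
      then have "1 # ?ss \<in> Mset n" unfolding Mset_def by (simp add: motzkin_mz step_seq_len)
      then have "wdr 0 (1 # ?ss) \<in> T" using T by blast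
      then show "andI_word I v \<in> T" using andI_wd[OF I, of v] by (simp only:)
    qed
  qed
  have "inj_on (wdr 0) (Mset n)"
  proof (rule inj_onI)
    fix x y assume "x \<in> Mset n" "y \<in> Mset n" "wdr 0 x = wdr 0 y"
    moreover have "set x \<subseteq> {-1,0,1}" "set y \<subseteq> {-1,0,1}" using calculation Mset_valid by auto
    ultimately show "x = y" using wdr_inj[of 0 x y] unfolding Mset_def by auto
  qed
  then have "card T = card (Mset n)" unfolding T by (rule card_image)
  also have "Mset n = Cons 1 ` {s. length s = n \<and> motzkin_path s}"
    unfolding Mset_def by (auto simp: motzkin_mz)
  also have "card \<dots> = motzkin_number n" unfolding motzkin_number_def
    by (rule card_image) simp
  finally show ?thesis using P1 P2 by blast
qed


end
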